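(* Let $A,B,C\in\widehat{\mathbb F_q^\times}$ with $A\neq\varepsilon$, $B\ne\varepsilon$, $A\neq C$, $B\neq C$, and let $\lambda\in\mathbb F_q^\times$. Then $$2\,{}_2\mathbb P_1\!\left[\begin{matrix}A&B\\&C\end{matrix};\lambda\right]=ABC(-1)\overline A(\lambda)\,{}_2\mathbb P_1\!\left[\begin{matrix}A&A\overline C\\&A\overline B\end{matrix};\tfrac1\lambda\right]+ABC(-1)\overline B(\lambda)\frac{J(B,\overline BC)}{J(A,\overline AC)}\,{}_2\mathbb P_1\!\left[\begin{matrix}B&B\overline C\\&B\overline A\end{matrix};\tfrac1\lambda\right],$$ and $$2\,{}_2\mathbb F_1\!\left[\begin{matrix}A&B\\&C\end{matrix};\lambda\right]=ABC(-1)\overline A(\lambda)\frac{J(\overline CA,\overline BC)}{J(B,C\overline B)}\,{}_2\mathbb F_1\!\left[\begin{matrix}A&A\overline C\\&A\overline B\end{matrix};\tfrac1\lambda\right]+ABC(-1)\overline B(\lambda)\frac{J(C\overline A,\overline CB)}{J(A,\overline AC)}\,{}_2\mathbb F_1\!\left[\begin{matrix}B&B\overline C\\&B\overline A\end{matrix};\tfrac1\lambda\right].$$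
   Context: $\mathbb F_q$ is a finite field with $q$ elements, $q$ a power of an odd prime $p$. $\widehat{\mathbb F_q^\times}$ is the group of multiplicative characters $\chi:\mathbb F_q^\times\to\mathbb C^\times$; every character, including the trivial character $\varepsilon$, is extended to $\mathbb F_q$ by $\chi(0)=0$. $\overline\chi$ denotes the complex-conjugate (inverse) character, and products of characters are pointwise (e.g. $\overline AC(x)=\overline A(x)C(x)$). Jacobi sum: $J(A,B)=\sum_{x\in\mathbb F_q}A(x)B(1-x)$. Period function: ${}_2\mathbb P_1\!\left[\begin{matrix}A&B\\&C\end{matrix};\lambda\right]=\sum_{y\in\mathbb F_q}B(y)\,\overline BC(1-y)\,\overline A(1-\lambda y)$; normalized function ${}_2\mathbb F_1\!\left[\begin{matrix}A&B\\&C\end{matrix};\lambda\right]=\frac{1}{J(B,C\overline B)}\,{}_2\mathbb P_1\!\left[\begin{matrix}A&B\\&C\end{matrix};\lambda\right]$. *)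

theory Defs
  imports Complex_Main
begin

text \<open>Multiplicative characters of a finite field 'a, extended by chi(0) = 0.
  A function chi : 'a => complex is such a character iff chi 0 = 0, chi 1 = 1 and chi
  is multiplicative (then chi restricted to nonzero elements is a homomorphism into C^x).\<close>
definition mult_char :: "('a::field \<Rightarrow> complex) \<Rightarrow> bool" where
  "mult_char \<chi> \<longleftrightarrow> \<chi> 0 = 0 \<and> \<chi> 1 = 1 \<and> (\<forall>x y. \<chi> (x * y) = \<chi> x * \<chi> y)"

definition triv_char :: "'a::field \<Rightarrow> complex" where
  "triv_char x = (if x = 0 then 0 else 1)"

text \<open>Conjugate (= inverse) character.\<close>
definition conj_char :: "('a \<Rightarrow> complex) \<Rightarrow> 'a \<Rightarrow> complex" where
  "conj_char \<chi> x = cnj (\<chi> x)"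

definition mul_char :: "('a \<Rightarrow> complex) \<Rightarrow> ('a \<Rightarrow> complex) \<Rightarrow> 'a \<Rightarrow> complex" where
  "mul_char \<chi> \<psi> x = \<chi> x * \<psi> x"

definition jacobi :: "('a::{field,finite} \<Rightarrow> complex) \<Rightarrow> ('a \<Rightarrow> complex) \<Rightarrow> complex" where
  "jacobi A B = (\<Sum>x\<in>UNIV. A x * B (1 - x))"

definition P21 :: "('a::{field,finite} \<Rightarrow> complex) \<Rightarrow> ('a \<Rightarrow> complex) \<Rightarrow> ('a \<Rightarrow> complex) \<Rightarrow> 'a \<Rightarrow> complex" where
  "P21 A B C lam = (\<Sum>y\<in>UNIV. B y * mul_char (conj_char B) C (1 - y) * conj_char A (1 - lam * y))"

definition F21 :: "('a::{field,finite} \<Rightarrow> complex) \<Rightarrow> ('a \<Rightarrow> complex) \<Rightarrow> ('a \<Rightarrow> complex) \<Rightarrow> 'a \<Rightarrow> complex" where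
  "F21 A B C lam = P21 A B C lam / jacobi B (mul_char C (conj_char B))"

end

theory Submission imports Defs begin

lemma mc_mult: "mult_char X \<Longrightarrow> X (x*y) = X x * X y" by (simp add: mult_char_def)
lemma mc_0[simp]: "mult_char X \<Longrightarrow> X 0 = 0" by (simp add: mult_char_def)
lemma mc_1[simp]: "mult_char X \<Longrightarrow> X 1 = 1" by (simp add: mult_char_def)

lemma mc_inv: assumes "mult_char X" shows "X (inverse x) = inverse (X x)"
proof (cases "x = 0")
  case True then show ?thesis using assms by simp
next
  case False
  have "X (inverse x) * X x = 1" using mc_mult[OF assms, of "inverse x" x] False assms by simp
  then show ?thesis by (metis inverse_unique mult.commute)
qed

lemma mc_nz: assumes "mult_char X" "x \<noteq> 0" shows "X x \<noteq> 0"
  using mc_inv[OF assms(1), of x] assms mc_mult[OF assms(1), of x "inverse x"] by auto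

lemma mc_pow: assumes "mult_char X" shows "X (x^n) = X x ^ n"
  by (induction n) (auto simp: mc_mult[OF assms] assms)

lemma fin_root: fixes x :: "'a::{field,finite}" assumes "x \<noteq> 0" shows "\<exists>k>0. x^k = 1"
proof -
  have "\<not> inj (\<lambda>n::nat. x^n)"
  proof
    assume "inj (\<lambda>n::nat. x^n)"
    then have "finite (UNIV::nat set)" using finite_imageD[of "\<lambda>n::nat. x^n" UNIV] by simp
    then show False by simp
  qed
  then obtain m n where mn: "x^m = x^n" "m \<noteq> n" unfolding inj_def by blast
  have aux: "x^(b-a) = 1" if "x^a = x^b" "a < b" for a b
  proof -
    have "x^b = x^a * x^(b-a)" using that by (metis le_add_diff_inverse less_imp_le power_add)
    then show ?thesis using that assms by simp
  qed
  show ?thesis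
  proof (cases "m < n")
    case True then show ?thesis using aux[OF mn(1)] by (intro exI[of _ "n-m"]) auto
  next
    case False then have "n < m" using mn by auto
    then show ?thesis using aux[of n m] mn(1) by (intro exI[of _ "m-n"]) auto
  qed
qed

lemma mc_norm: fixes X :: "'a::{field,finite} \<Rightarrow> complex"
  assumes "mult_char X" "x \<noteq> 0" shows "norm (X x) = 1"
proof -
  obtain k where k: "k > 0" "x^k = 1" using fin_root[OF assms(2)] by blast
  then have "X x ^ k = 1" using mc_pow[OF assms(1)] assms by (metis mc_1)
  then show ?thesis using power_eq_1_iff k by blast
qed

lemma conj_char_eq: fixes X :: "'a::{field,finite} \<Rightarrow> complex"
  assumes "mult_char X" shows "conj_char X = (\<lambda>x. inverse (X x))"
proof
  fix x
  show "conj_char X x = inverse (X x)"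
  proof (cases "x = 0")
    case True then show ?thesis using assms by (simp add: conj_char_def)
  next
    case False
    have n: "norm (X x) = 1" using mc_norm[OF assms False] .
    have "X x * cnj (X x) = 1" using complex_norm_square[of "X x"] n by simp
    then show ?thesis unfolding conj_char_def by (metis inverse_unique)
  qed
qed

lemma mc_invf: "mult_char X \<Longrightarrow> mult_char (\<lambda>x. inverse (X x))"
  unfolding mult_char_def by (metis inverse_mult_distrib inverse_zero inverse_1)
lemma mc_mulf: "mult_char X \<Longrightarrow> mult_char Y \<Longrightarrow> mult_char (\<lambda>x. X x * Y x)"
  unfolding mult_char_def by (simp add: mult_ac)

lemma mc_m1: assumes "mult_char X" shows "X (-1) * X (-1) = 1"
  using mc_mult[OF assms, of "-1" "-1"] assms by simp

lemma nontriv_ex: assumes "mult_char X" "X \<noteq> triv_char" shows "\<exists>a. a \<noteq> 0 \<and> X a \<noteq> 1"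
proof (rule ccontr)
  assume "\<not> ?thesis"
  then have "X x = triv_char x" for x using assms(1) unfolding triv_char_def by (cases "x = 0") auto
  then have "X = triv_char" by blast
  then show False using assms by simp
qed

lemma sum_reindex_inj: fixes g :: "'a::finite \<Rightarrow> 'a"
  assumes "inj g" shows "(\<Sum>x\<in>UNIV. f (g x)) = (\<Sum>x\<in>UNIV. f x)"
proof -
  have "range g = UNIV" using assms by (simp add: finite_UNIV_inj_surj)
  then show ?thesis using sum.reindex[OF assms, of f] by simp
qed

lemma sum_scale: fixes c :: "'a::{field,finite}"
  assumes "c \<noteq> 0" shows "(\<Sum>x\<in>UNIV. f (c * x)) = (\<Sum>x\<in>UNIV. f x)"
proof (rule sum_reindex_inj)
  show "inj (\<lambda>x. c * x)" unfolding inj_def using assms by simp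
qed

lemma char_sum_zero: fixes X :: "'a::{field,finite} \<Rightarrow> complex"
  assumes "mult_char X" "a \<noteq> 0" "X a \<noteq> 1" shows "(\<Sum>x\<in>UNIV. X x) = 0"
proof -
  have "(\<Sum>x\<in>UNIV. X x) = (\<Sum>x\<in>UNIV. X (a * x))" using sum_scale[OF assms(2), of X] by simp
  also have "\<dots> = X a * (\<Sum>x\<in>UNIV. X x)" by (simp add: mc_mult[OF assms(1)] sum_distrib_left)
  finally have "(1 - X a) * (\<Sum>x\<in>UNIV. X x) = 0" by (simp add: algebra_simps)
  then show ?thesis using assms(3) by simp
qed

lemma char_sum_zero': fixes X :: "'a::{field,finite} \<Rightarrow> complex"
  assumes "mult_char X" "X \<noteq> triv_char" shows "(\<Sum>x\<in>UNIV. X x) = 0"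
  using nontriv_ex[OF assms] char_sum_zero[OF assms(1)] by blast


lemma inner_sum: fixes A D :: "'a::{field,finite} \<Rightarrow> complex"
  assumes A: "mult_char A" and D: "mult_char D" and An: "A \<noteq> triv_char"
    and ADn: "(\<lambda>x. A x * D x) \<noteq> triv_char"
  shows "(\<Sum>u\<in>UNIV. A u * D (w - r*u)) = jacobi A D * A w * D w * inverse (A r)"
proof (cases "r = 0")
  case True
  have "(\<Sum>u\<in>UNIV. A u * D (w - r*u)) = D w * (\<Sum>u\<in>UNIV. A u)" using True
    by (simp add: sum_distrib_left mult.commute)
  also have "\<dots> = 0" using char_sum_zero'[OF A An] by simp
  finally show ?thesis using True A by simp
next
  case rn: False
  show ?thesis
  proof (cases "w = 0")
    case True
    have "(\<Sum>u\<in>UNIV. A u * D (w - r*u)) = (\<Sum>u\<in>UNIV. D (-r) * (A u * D u))"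
      using True by (intro sum.cong refl) (simp add: mc_mult[OF D, symmetric] mult_ac)
    also have "\<dots> = D (-r) * (\<Sum>u\<in>UNIV. A u * D u)" by (simp add: sum_distrib_left)
    also have "\<dots> = 0" using char_sum_zero'[OF mc_mulf[OF A D] ADn] by simp
    finally show ?thesis using True A by simp
  next
    case wn: False
    define c where "c = w / r"
    have cn: "c \<noteq> 0" using rn wn c_def by simp
    have "(\<Sum>u\<in>UNIV. A u * D (w - r*u)) = (\<Sum>v\<in>UNIV. A (c*v) * D (w - r*(c*v)))"
      using sum_scale[OF cn, of "\<lambda>u. A u * D (w - r*u)"] by simp
    also have "\<dots> = (\<Sum>v\<in>UNIV. (A w * D w * inverse (A r)) * (A v * D (1 - v)))"
    proof (intro sum.cong refl)
      fix v
      have 1: "c * v = w * (inverse r * v)" using c_def by (simp add: field_simps)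
      have 2: "w - r*(c*v) = w * (1 - v)" using c_def rn by (simp add: field_simps)
      show "A (c*v) * D (w - r*(c*v)) = (A w * D w * inverse (A r)) * (A v * D (1 - v))"
      proof -
        have a: "A (c*v) = A w * inverse (A r) * A v" unfolding 1 by (simp add: mc_mult[OF A] mc_inv[OF A])
        have d: "D (w - r*(c*v)) = D w * D (1 - v)" unfolding 2 by (simp add: mc_mult[OF D])
        show ?thesis unfolding a d by (simp add: mult_ac)
      qed
    qed
    also have "\<dots> = A w * D w * inverse (A r) * jacobi A D"
      unfolding jacobi_def by (simp add: sum_distrib_left)
    finally show ?thesis by (simp add: mult_ac)
  qed
qed


lemma T_lemma: fixes A B D :: "'a::{field,finite} \<Rightarrow> complex"
  assumes A: "mult_char A" and D: "mult_char D" and An: "A \<noteq> triv_char"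
    and ADn: "(\<lambda>x. A x * D x) \<noteq> triv_char"
  shows "(\<Sum>u\<in>UNIV. \<Sum>y\<in>UNIV. A u * B y * D (1 - u - y + lam*u*y))
       = jacobi A D * (\<Sum>y\<in>UNIV. B y * (A (1-y) * D (1-y)) * inverse (A (1 - lam*y)))"
proof -
  have "(\<Sum>u\<in>UNIV. \<Sum>y\<in>UNIV. A u * B y * D (1 - u - y + lam*u*y))
      = (\<Sum>y\<in>UNIV. \<Sum>u\<in>UNIV. A u * B y * D (1 - u - y + lam*u*y))" by (rule sum.swap)
  also have "\<dots> = (\<Sum>y\<in>UNIV. B y * (\<Sum>u\<in>UNIV. A u * D ((1-y) - (1 - lam*y)*u)))"
  proof (intro sum.cong refl)
    fix y
    have e: "\<And>u. 1 - u - y + lam*u*y = (1-y) - (1 - lam*y)*u" by (simp add: algebra_simps)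
    show "(\<Sum>u\<in>UNIV. A u * B y * D (1 - u - y + lam*u*y)) = B y * (\<Sum>u\<in>UNIV. A u * D ((1-y) - (1 - lam*y)*u))"
      unfolding e by (simp add: sum_distrib_left mult_ac)
  qed
  also have "\<dots> = (\<Sum>y\<in>UNIV. B y * (jacobi A D * A (1-y) * D (1-y) * inverse (A (1 - lam*y))))"
    using inner_sum[OF A D An ADn] by simp
  also have "\<dots> = jacobi A D * (\<Sum>y\<in>UNIV. B y * (A (1-y) * D (1-y)) * inverse (A (1 - lam*y)))"
    by (simp add: sum_distrib_left mult_ac)
  finally show ?thesis .
qed

lemma triple_lemma: fixes A B D :: "'a::{field,finite} \<Rightarrow> complex"
  assumes A: "mult_char A" and B: "mult_char B" and D: "mult_char D"
    and An: "A \<noteq> triv_char" and Bn: "B \<noteq> triv_char"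
    and ADn: "(\<lambda>x. A x * D x) \<noteq> triv_char" and BDn: "(\<lambda>x. B x * D x) \<noteq> triv_char"
  shows "jacobi B D * jacobi A (\<lambda>z. B z * D z) = jacobi A D * jacobi B (\<lambda>z. A z * D z)"
proof -
  have gen: "(\<Sum>x\<in>UNIV. \<Sum>y\<in>UNIV. X x * Y y * D (1 - x - y)) = jacobi Y D * jacobi X (\<lambda>z. Y z * D z)"
    if X: "mult_char X" and Y: "mult_char Y" and Yn: "Y \<noteq> triv_char" and YDn: "(\<lambda>x. Y x * D x) \<noteq> triv_char"
    for X Y
  proof -
    have "(\<Sum>x\<in>UNIV. \<Sum>y\<in>UNIV. X x * Y y * D (1 - x - y)) = (\<Sum>x\<in>UNIV. X x * (\<Sum>y\<in>UNIV. Y y * D ((1-x) - 1*y)))"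
      by (simp add: sum_distrib_left mult_ac algebra_simps)
    also have "\<dots> = (\<Sum>x\<in>UNIV. X x * (jacobi Y D * Y (1-x) * D (1-x) * inverse (Y 1)))"
      using inner_sum[OF Y D Yn YDn, of "1 - _" 1] by simp
    also have "\<dots> = jacobi Y D * jacobi X (\<lambda>z. Y z * D z)"
      unfolding jacobi_def[of X] using Y by (simp add: sum_distrib_left mult_ac)
    finally show ?thesis .
  qed
  have "(\<Sum>x\<in>UNIV. \<Sum>y\<in>UNIV. A x * B y * D (1 - x - y)) = (\<Sum>y\<in>UNIV. \<Sum>x\<in>UNIV. A x * B y * D (1 - x - y))"
    by (rule sum.swap)
  also have "\<dots> = (\<Sum>y\<in>UNIV. \<Sum>x\<in>UNIV. B y * A x * D (1 - y - x))"
    by (simp add: mult_ac algebra_simps)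
  finally show ?thesis using gen[OF A B Bn BDn] gen[OF B A An ADn] by simp
qed

lemma neq_triv: fixes X Y :: "'a::{field,finite} \<Rightarrow> complex"
  assumes X: "mult_char X" and Y: "mult_char Y" and ne: "X \<noteq> Y"
  shows "(\<lambda>z. inverse (X z) * Y z) \<noteq> triv_char"
proof
  assume h: "(\<lambda>z. inverse (X z) * Y z) = triv_char"
  have "X z = Y z" for z
  proof (cases "z = 0")
    case True then show ?thesis using X Y by simp
  next
    case False
    have "inverse (X z) * Y z = 1" using fun_cong[OF h, of z] False by (simp add: triv_char_def)
    then show ?thesis using mc_nz[OF X False] by (simp add: field_simps)
  qed
  then show False using ne by blast
qed


lemma g_inj: fixes u :: "'a::field"
  assumes "u \<noteq> 1" shows "inj (\<lambda>y. if y = 1 then u else (1 - u*y) / (1 - y))"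
proof (rule injI)
  fix a b assume h: "(if a = 1 then u else (1 - u*a) / (1 - a)) = (if b = 1 then u else (1 - u*b) / (1 - b))"
  have k: "(1 - u*c) / (1 - c) \<noteq> u" if "c \<noteq> 1" for c
  proof
    assume "(1 - u*c) / (1 - c) = u"
    then have "1 - u*c = u * (1 - c)" using that by (simp add: field_simps)
    then show False using assms by (simp add: algebra_simps)
  qed
  have k': "u \<noteq> (1 - u*c) / (1 - c)" if "c \<noteq> 1" for c using k[OF that] by metis
  show "a = b"
  proof (cases "a = 1"; cases "b = 1")
    assume "a \<noteq> 1" "b \<noteq> 1"
    then have "(1 - u*a) * (1 - b) = (1 - u*b) * (1 - a)" using h by (simp add: field_simps)
    then have "(a - b) * (1 - u) = 0" by (simp add: algebra_simps)
    then show ?thesis using assms by simp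
  qed (use h k k' in auto)
qed

lemma J_nz: fixes X Y :: "'a::{field,finite} \<Rightarrow> complex"
  assumes X: "mult_char X" and Y: "mult_char Y" and Xn: "X \<noteq> triv_char"
  shows "jacobi X Y \<noteq> 0"
proof -
  obtain a where a: "a \<noteq> 0" "X a \<noteq> 1" using nontriv_ex[OF X Xn] by blast
  have sX: "(\<Sum>x\<in>UNIV. X x) = 0" using char_sum_zero'[OF X Xn] .
  show ?thesis
  proof (cases "Y = triv_char")
    case True
    have "jacobi X Y = (\<Sum>x\<in>UNIV. X x - (if x = 1 then 1 else 0))"
      unfolding jacobi_def True triv_char_def using X by (intro sum.cong refl) auto
    also have "\<dots> = -1" using sX by (simp add: sum_subtractf)
    finally show ?thesis by simp
  next
    case Yn: False
    show ?thesis
    proof (cases "(\<lambda>z. X z * Y z) = triv_char")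
      case True
      have Yi: "Y z = inverse (X z)" for z
      proof (cases "z = 0")
        case True then show ?thesis using X Y by simp
      next
        case False
        have "X z * Y z = 1" using fun_cong[OF \<open>(\<lambda>z. X z * Y z) = triv_char\<close>, of z] False by (simp add: triv_char_def)
        then show ?thesis by (metis inverse_unique)
      qed
      have "jacobi X Y = (\<Sum>x\<in>UNIV. inverse (X (inverse x - 1)) - (if x = 0 then inverse (X (-1)) else 0))"
        unfolding jacobi_def
      proof (intro sum.cong refl)
        fix x
        show "X x * Y (1 - x) = inverse (X (inverse x - 1)) - (if x = 0 then inverse (X (-1)) else 0)"
        proof (cases "x = 0")
          case True then show ?thesis using X by simp
        next
          case False
          have "inverse x - 1 = (1 - x) * inverse x" using False by (simp add: field_simps)
          then show ?thesis using False by (simp add: Yi mc_mult[OF X] mc_inv[OF X])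
        qed
      qed
      also have "\<dots> = (\<Sum>x\<in>UNIV. inverse (X (inverse x - 1))) - inverse (X (-1))"
        by (simp add: sum_subtractf)
      also have "(\<Sum>x\<in>UNIV. inverse (X (inverse x - 1))) = (\<Sum>x\<in>UNIV. inverse (X x))"
        by (rule sum_reindex_inj[of "\<lambda>x. inverse x - 1" "\<lambda>z. inverse (X z)"]) (auto simp: inj_def)
      also have "\<dots> = 0" using char_sum_zero[OF mc_invf[OF X] a(1)] a(2) by simp
      finally have "jacobi X Y = - inverse (X (-1))" by simp
      then show ?thesis using mc_nz[OF X, of "-1"] by simp
    next
      case XYn: False
      have sXY: "(\<Sum>x\<in>UNIV. X x * Y x) = 0" using char_sum_zero'[OF mc_mulf[OF X Y] XYn] .
      have sY: "(\<Sum>x\<in>UNIV. Y x) = 0" using char_sum_zero'[OF Y Yn] .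
      have cX: "cnj (X z) = inverse (X z)" for z using fun_cong[OF conj_char_eq[OF X], of z] by (simp add: conj_char_def)
      have cY: "cnj (Y z) = inverse (Y z)" for z using fun_cong[OF conj_char_eq[OF Y], of z] by (simp add: conj_char_def)
      define K where "K u = (\<Sum>y\<in>UNIV. Y (1 - u*y) * inverse (Y (1 - y)))" for u
      have K1: "K 1 = of_nat (card (UNIV::'a set)) - 1"
      proof -
        have "K 1 = (\<Sum>y\<in>(UNIV::'a set). 1 - (if y = 1 then 1 else 0))"
          unfolding K_def
        proof (rule sum.cong[OF refl])
          fix y show "Y (1 - 1 * y) * inverse (Y (1 - y)) = 1 - (if y = 1 then 1 else 0)"
            using mc_nz[OF Y, of "1 - y"] Y by (cases "y = 1") simp_all
        qed
        then show ?thesis by (simp add: sum_subtractf)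
      qed
      have Ku: "K u = - Y u" if "u \<noteq> 1" for u
      proof -
        define g where "g y = (if y = 1 then u else (1 - u*y) / (1 - y))" for y
        have "K u = (\<Sum>y\<in>UNIV. Y (g y) - (if y = 1 then Y u else 0))"
          unfolding K_def
        proof (intro sum.cong refl)
          fix y show "Y (1 - u*y) * inverse (Y (1 - y)) = Y (g y) - (if y = 1 then Y u else 0)"
            using Y by (cases "y = 1") (auto simp: g_def divide_inverse mc_mult[OF Y] mc_inv[OF Y])
        qed
        also have "\<dots> = (\<Sum>y\<in>UNIV. Y (g y)) - Y u" by (simp add: sum_subtractf)
        also have "(\<Sum>y\<in>UNIV. Y (g y)) = 0" using sum_reindex_inj[of g Y] g_inj[OF that] sY
          unfolding g_def by simp
        finally show ?thesis by simp
      qed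
      have "jacobi X Y * cnj (jacobi X Y) = (\<Sum>x\<in>UNIV. \<Sum>y\<in>UNIV. X x * Y (1 - x) * (inverse (X y) * inverse (Y (1 - y))))"
        unfolding jacobi_def by (simp add: sum_product cX cY)
      also have "\<dots> = (\<Sum>y\<in>UNIV. \<Sum>x\<in>UNIV. X x * Y (1 - x) * (inverse (X y) * inverse (Y (1 - y))))"
        by (rule sum.swap)
      also have "\<dots> = (\<Sum>y\<in>UNIV. \<Sum>u\<in>UNIV. X u * (Y (1 - y*u) * inverse (Y (1 - y))))"
      proof (rule sum.cong[OF refl])
        fix y
        show "(\<Sum>x\<in>UNIV. X x * Y (1 - x) * (inverse (X y) * inverse (Y (1 - y)))) = (\<Sum>u\<in>UNIV. X u * (Y (1 - y*u) * inverse (Y (1 - y))))"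
        proof (cases "y = 0")
          case True then show ?thesis using X Y sX by (simp add: sum_distrib_right[symmetric])
        next
          case False
          have "(\<Sum>x\<in>UNIV. X x * Y (1 - x) * (inverse (X y) * inverse (Y (1 - y)))) = (\<Sum>u\<in>UNIV. X (y*u) * Y (1 - y*u) * (inverse (X y) * inverse (Y (1 - y))))"
            using sum_scale[OF False, of "\<lambda>x. X x * Y (1 - x) * (inverse (X y) * inverse (Y (1 - y)))"] by simp
          also have "\<dots> = (\<Sum>u\<in>UNIV. X u * (Y (1 - y*u) * inverse (Y (1 - y))))"
            using mc_nz[OF X False] by (intro sum.cong refl) (simp add: mc_mult[OF X] field_simps)
          finally show ?thesis .
        qed
      qed
      also have "\<dots> = (\<Sum>u\<in>UNIV. X u * K u)"
        unfolding K_def by (subst sum.swap) (simp add: sum_distrib_left mult.commute)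
      also have "\<dots> = (\<Sum>u\<in>UNIV. (if u = 1 then of_nat (card (UNIV::'a set)) else 0) - X u * Y u)"
        by (intro sum.cong refl) (use K1 Ku X Y in auto)
      also have "\<dots> = of_nat (card (UNIV::'a set))" using sXY by (simp add: sum_subtractf)
      finally have "jacobi X Y * cnj (jacobi X Y) = of_nat (card (UNIV::'a set))" .
      moreover have "card (UNIV::'a set) \<noteq> 0" by simp
      ultimately show ?thesis by auto
    qed
  qed
qed


lemma mul_char_eq: "mul_char X Y = (\<lambda>x. X x * Y x)" by (simp add: fun_eq_iff mul_char_def)

lemma P21_eq: fixes A B C :: "'a::{field,finite} \<Rightarrow> complex"
  assumes A: "mult_char A" and B: "mult_char B"
  shows "P21 A B C lam = (\<Sum>y\<in>UNIV. B y * (inverse (B (1-y)) * C (1-y)) * inverse (A (1 - lam*y)))"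
  unfolding P21_def conj_char_eq[OF A] conj_char_eq[OF B] mul_char_eq by simp

lemma transf_I: fixes A B C :: "'a::{field,finite} \<Rightarrow> complex"
  assumes A: "mult_char A" and B: "mult_char B" and C: "mult_char C" and lam: "lam \<noteq> 0"
  shows "P21 A B C lam = A (-1) * B (-1) * C (-1) * conj_char A lam
             * P21 A (mul_char A (conj_char C)) (mul_char A (conj_char B)) (inverse lam)"
proof -
  have B': "mult_char (\<lambda>x. A x * inverse (C x))" by (rule mc_mulf[OF A mc_invf[OF C]])
  have e: "P21 A (mul_char A (conj_char C)) (mul_char A (conj_char B)) (inverse lam)
     = (\<Sum>t\<in>UNIV. (A t * inverse (C t)) * (inverse (A (1-t) * inverse (C (1-t))) * (A (1-t) * inverse (B (1-t))))
          * inverse (A (1 - inverse lam * t)))"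
    unfolding conj_char_eq[OF C] conj_char_eq[OF B] mul_char_eq P21_eq[OF A B'] by simp
  also have "\<dots> = (\<Sum>y\<in>UNIV. (A (inverse y) * inverse (C (inverse y))) * (inverse (A (1-inverse y) * inverse (C (1-inverse y))) * (A (1-inverse y) * inverse (B (1-inverse y))))
          * inverse (A (1 - inverse lam * inverse y)))"
    by (rule sum_reindex_inj[symmetric]) (simp add: inj_def)
  finally have e2: "P21 A (mul_char A (conj_char C)) (mul_char A (conj_char B)) (inverse lam) = \<dots>" .
  have m1: "A (-1) * A (-1) = 1" "B (-1) * B (-1) = 1" "C (-1) * C (-1) = 1" using mc_m1 A B C by auto
  show ?thesis
    unfolding e2 P21_eq[OF A B] conj_char_eq[OF A] sum_distrib_left
  proof (rule sum.cong[OF refl])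
    fix y
    show "B y * (inverse (B (1 - y)) * C (1 - y)) * inverse (A (1 - lam * y)) =
         A (- 1) * B (- 1) * C (- 1) * inverse (A lam) *
         (A (inverse y) * inverse (C (inverse y)) *
          (inverse (A (1 - inverse y) * inverse (C (1 - inverse y))) * (A (1 - inverse y) * inverse (B (1 - inverse y)))) *
          inverse (A (1 - inverse lam * inverse y)))"
    proof (cases "y = 0 \<or> y = 1 \<or> lam * y = 1")
      case True
      moreover have "1 - inverse lam * inverse y = 0" if "lam * y = 1"
        using that lam by (simp add: field_simps)
      moreover have "1 - inverse y = 0" if "y = 1" using that by simp
      ultimately show ?thesis using A B C by auto
    next
      case False
      then have y0: "y \<noteq> 0" and y1: "1 - y \<noteq> 0" and y2: "1 - lam*y \<noteq> 0" by auto
      have i1: "1 - inverse y = (-1) * ((1 - y) * inverse y)" using y0 by (simp add: field_simps)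
      have i2: "1 - inverse lam * inverse y = (-1) * ((1 - lam*y) * (inverse lam * inverse y))"
        using y0 lam by (simp add: field_simps)
      have nz: "A y \<noteq> 0" "B y \<noteq> 0" "C y \<noteq> 0" "A (1-y) \<noteq> 0" "B (1-y) \<noteq> 0" "C (1-y) \<noteq> 0"
        "A (1-lam*y) \<noteq> 0" "A lam \<noteq> 0" "A (-1) \<noteq> 0" "B (-1) \<noteq> 0" "C (-1) \<noteq> 0"
        using mc_nz[OF A y0] mc_nz[OF B y0] mc_nz[OF C y0] mc_nz[OF A y1] mc_nz[OF B y1] mc_nz[OF C y1]
          mc_nz[OF A y2] mc_nz[OF A lam] mc_nz[OF A, of "-1"] mc_nz[OF B, of "-1"] mc_nz[OF C, of "-1"] by auto
      have v: "A (1 - inverse y) = A (-1) * (A (1-y) * inverse (A y))"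
        "B (1 - inverse y) = B (-1) * (B (1-y) * inverse (B y))"
        "C (1 - inverse y) = C (-1) * (C (1-y) * inverse (C y))"
        "A (1 - inverse lam * inverse y) = A (-1) * (A (1-lam*y) * (inverse (A lam) * inverse (A y)))"
        "A (inverse y) = inverse (A y)" "C (inverse y) = inverse (C y)"
        by (simp only: i1 i2 mc_mult[OF A] mc_mult[OF B] mc_mult[OF C] mc_inv[OF A] mc_inv[OF B] mc_inv[OF C])+
      show ?thesis unfolding v
        using nz m1 by (simp add: field_simps)
    qed
  qed
qed


lemma sym_P: fixes A B C :: "'a::{field,finite} \<Rightarrow> complex"
  assumes A: "mult_char A" and B: "mult_char B" and C: "mult_char C"
    and An: "A \<noteq> triv_char" and Bn: "B \<noteq> triv_char" and AC: "A \<noteq> C" and BC: "B \<noteq> C"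
  shows "P21 A B C lam * jacobi A (mul_char (conj_char A) C) = jacobi B (mul_char (conj_char B) C) * P21 B A C lam"
proof -
  define D where "D z = inverse (A z) * inverse (B z) * C z" for z
  have D: "mult_char D" unfolding D_def by (rule mc_mulf[OF mc_mulf[OF mc_invf[OF A] mc_invf[OF B]] C])
  have ADe: "A z * D z = inverse (B z) * C z" for z
  proof (cases "z = 0")
    case True then show ?thesis using C unfolding D_def by simp
  next
    case False then have "A z \<noteq> 0" using mc_nz[OF A] by blast
    then show ?thesis unfolding D_def by (simp add: field_simps)
  qed
  have BDe: "B z * D z = inverse (A z) * C z" for z
  proof (cases "z = 0")
    case True then show ?thesis using C unfolding D_def by simp
  next
    case False then have "B z \<noteq> 0" using mc_nz[OF B] by blast
    then show ?thesis unfolding D_def by (simp add: field_simps)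
  qed
  have ADf: "(\<lambda>z. A z * D z) = (\<lambda>z. inverse (B z) * C z)" using ADe by auto
  have BDf: "(\<lambda>z. B z * D z) = (\<lambda>z. inverse (A z) * C z)" using BDe by auto
  have ADn: "(\<lambda>z. A z * D z) \<noteq> triv_char" unfolding ADf by (rule neq_triv[OF B C BC])
  have BDn: "(\<lambda>z. B z * D z) \<noteq> triv_char" unfolding BDf by (rule neq_triv[OF A C AC])
  note T1 = T_lemma[OF A D An ADn, of B lam]
  note T2 = T_lemma[OF B D Bn BDn, of A lam]
  have TT: "(\<Sum>u\<in>UNIV. \<Sum>y\<in>UNIV. A u * B y * D (1 - u - y + lam*u*y))
      = (\<Sum>u\<in>UNIV. \<Sum>y\<in>UNIV. B u * A y * D (1 - u - y + lam*u*y))"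
  proof -
    have "(\<Sum>u\<in>UNIV. \<Sum>y\<in>UNIV. A u * B y * D (1 - u - y + lam*u*y))
      = (\<Sum>y\<in>UNIV. \<Sum>u\<in>UNIV. A u * B y * D (1 - u - y + lam*u*y))" by (rule sum.swap)
    also have "\<dots> = (\<Sum>u\<in>UNIV. \<Sum>y\<in>UNIV. B u * A y * D (1 - u - y + lam*u*y))"
    proof (rule sum.cong[OF refl], rule sum.cong[OF refl])
      fix u y
      have "1 - y - u + lam*y*u = 1 - u - y + lam*u*y" by (simp add: algebra_simps)
      then show "A y * B u * D (1 - y - u + lam*y*u) = B u * A y * D (1 - u - y + lam*u*y)" by (metis mult.commute)
    qed
    finally show ?thesis .
  qed
  have e1: "jacobi A D * P21 A B C lam = jacobi B D * P21 B A C lam"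
  proof -
    have t1: "(\<Sum>u\<in>UNIV. \<Sum>y\<in>UNIV. A u * B y * D (1 - u - y + lam*u*y)) = jacobi A D * P21 A B C lam"
      using T1 unfolding P21_eq[OF A B] ADe .
    have t2: "(\<Sum>u\<in>UNIV. \<Sum>y\<in>UNIV. B u * A y * D (1 - u - y + lam*u*y)) = jacobi B D * P21 B A C lam"
      using T2 unfolding P21_eq[OF B A] BDe .
    have "jacobi A D * P21 A B C lam = (\<Sum>u\<in>UNIV. \<Sum>y\<in>UNIV. A u * B y * D (1 - u - y + lam*u*y))"
      using t1 by (rule sym)
    also have "\<dots> = jacobi B D * P21 B A C lam"
      using TT t2 by (rule trans)
    finally show ?thesis .
  qed
  have e2: "jacobi B D * jacobi A (\<lambda>z. inverse (A z) * C z) = jacobi A D * jacobi B (\<lambda>z. inverse (B z) * C z)"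
    using triple_lemma[OF A B D An Bn ADn BDn] unfolding ADf BDf .
  have nz: "jacobi B D \<noteq> 0" by (rule J_nz[OF B D Bn])
  have "jacobi B D * (P21 A B C lam * jacobi A (\<lambda>z. inverse (A z) * C z))
      = jacobi B D * (jacobi B (\<lambda>z. inverse (B z) * C z) * P21 B A C lam)"
  proof -
    have "jacobi B D * (P21 A B C lam * jacobi A (\<lambda>z. inverse (A z) * C z))
        = P21 A B C lam * (jacobi B D * jacobi A (\<lambda>z. inverse (A z) * C z))" by (simp only: mult_ac)
    also have "\<dots> = P21 A B C lam * (jacobi A D * jacobi B (\<lambda>z. inverse (B z) * C z))" by (simp only: e2)
    also have "\<dots> = (jacobi A D * P21 A B C lam) * jacobi B (\<lambda>z. inverse (B z) * C z)" by (simp only: mult_ac)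
    also have "\<dots> = (jacobi B D * P21 B A C lam) * jacobi B (\<lambda>z. inverse (B z) * C z)" by (simp only: e1)
    also have "\<dots> = jacobi B D * (jacobi B (\<lambda>z. inverse (B z) * C z) * P21 B A C lam)" by (simp only: mult_ac)
    finally show ?thesis .
  qed
  then show ?thesis using nz unfolding conj_char_eq[OF A] conj_char_eq[OF B] mul_char_eq by simp
qed


lemma J_sym: fixes X Y :: "'a::{field,finite} \<Rightarrow> complex"
  shows "jacobi X Y = jacobi Y X"
proof -
  have "jacobi X Y = (\<Sum>x\<in>UNIV. (\<lambda>t. X t * Y (1 - t)) (1 - x))"
    unfolding jacobi_def by (rule sum_reindex_inj[symmetric]) (simp add: inj_def)
  then show ?thesis unfolding jacobi_def by (simp add: mult.commute)
qed

lemma cancel_fun: fixes X Y Z :: "'a::{field,finite} \<Rightarrow> complex"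
  assumes X: "mult_char X" and Y: "mult_char Y" and Z: "mult_char Z"
  shows "(\<lambda>x. X x * inverse (Y x) * inverse (X x * inverse (Z x))) = (\<lambda>x. inverse (Y x) * Z x)"
proof
  fix x show "X x * inverse (Y x) * inverse (X x * inverse (Z x)) = inverse (Y x) * Z x"
  proof (cases "x = 0")
    case True then show ?thesis using X Y Z by simp
  next
    case False
    then have "X x \<noteq> 0" "Z x \<noteq> 0" using mc_nz X Z by blast+
    then show ?thesis by (simp add: field_simps)
  qed
qed

theorem mainTheorem4:
  fixes A B C :: "'a::{field,finite} \<Rightarrow> complex" and lam :: 'a
  assumes q_odd: "odd (card (UNIV :: 'a set))"
    and chars: "mult_char A" "mult_char B" "mult_char C"
    and "A \<noteq> triv_char" "B \<noteq> triv_char" "A \<noteq> C" "B \<noteq> C"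
    and "lam \<noteq> 0"
  shows "(2 * P21 A B C lam =
           A (-1) * B (-1) * C (-1) * conj_char A lam
             * P21 A (mul_char A (conj_char C)) (mul_char A (conj_char B)) (inverse lam)
         + A (-1) * B (-1) * C (-1) * conj_char B lam
             * (jacobi B (mul_char (conj_char B) C) / jacobi A (mul_char (conj_char A) C))
             * P21 B (mul_char B (conj_char C)) (mul_char B (conj_char A)) (inverse lam)) \<and>
         (2 * F21 A B C lam =
           A (-1) * B (-1) * C (-1) * conj_char A lam
             * (jacobi (mul_char (conj_char C) A) (mul_char (conj_char B) C) / jacobi B (mul_char C (conj_char B)))
             * F21 A (mul_char A (conj_char C)) (mul_char A (conj_char B)) (inverse lam)
         + A (-1) * B (-1) * C (-1) * conj_char B lam
             * (jacobi (mul_char C (conj_char A)) (mul_char (conj_char C) B) / jacobi A (mul_char (conj_char A) C))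
             * F21 B (mul_char B (conj_char C)) (mul_char B (conj_char A)) (inverse lam))"
proof -
  note A = chars(1) and B = chars(2) and C = chars(3)
  note An = assms(5) and Bn = assms(6) and AC = assms(7) and BC = assms(8) and lam = assms(9)
  define s where "s = A (-1) * B (-1) * C (-1)"
  define P where "P = P21 A B C lam"
  define P' where "P' = P21 B A C lam"
  define P1 where "P1 = P21 A (mul_char A (conj_char C)) (mul_char A (conj_char B)) (inverse lam)"
  define P2 where "P2 = P21 B (mul_char B (conj_char C)) (mul_char B (conj_char A)) (inverse lam)"
  define JA where "JA = jacobi A (mul_char (conj_char A) C)"
  define JB where "JB = jacobi B (mul_char (conj_char B) C)"
  define N1 where "N1 = jacobi (mul_char (conj_char C) A) (mul_char (conj_char B) C)"
  define N2 where "N2 = jacobi (mul_char C (conj_char A)) (mul_char (conj_char C) B)"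
  have IA: "P = s * conj_char A lam * P1" unfolding P_def P1_def s_def by (rule transf_I[OF A B C lam])
  have IB: "P' = s * conj_char B lam * P2" unfolding P'_def P2_def s_def
    using transf_I[OF B A C lam] by (simp add: mult_ac)
  have SY: "P * JA = JB * P'" unfolding P_def P'_def JA_def JB_def by (rule sym_P[OF A B C An Bn AC BC])
  have cA: "conj_char A = (\<lambda>x. inverse (A x))" by (rule conj_char_eq[OF A])
  have cB: "conj_char B = (\<lambda>x. inverse (B x))" by (rule conj_char_eq[OF B])
  have cC: "conj_char C = (\<lambda>x. inverse (C x))" by (rule conj_char_eq[OF C])
  have JAnz: "JA \<noteq> 0" unfolding JA_def by (rule J_nz[OF A _ An]) (simp add: mul_char_eq cA mc_mulf[OF mc_invf[OF A] C])
  have JBnz: "JB \<noteq> 0" unfolding JB_def by (rule J_nz[OF B _ Bn]) (simp add: mul_char_eq cB mc_mulf[OF mc_invf[OF B] C])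
  have JA': "JA = jacobi A (\<lambda>x. inverse (A x) * C x)" unfolding JA_def cA mul_char_eq ..
  have JB': "JB = jacobi B (\<lambda>x. inverse (B x) * C x)" unfolding JB_def cB mul_char_eq ..
  have JB2: "jacobi B (mul_char C (conj_char B)) = JB" unfolding JB_def mul_char_eq by (simp add: mult.commute)
  have cAC: "conj_char (mul_char A (conj_char C)) = (\<lambda>x. inverse (A x * inverse (C x)))"
    unfolding cC mul_char_eq by (rule conj_char_eq[OF mc_mulf[OF A mc_invf[OF C]]])
  have cBC: "conj_char (mul_char B (conj_char C)) = (\<lambda>x. inverse (B x * inverse (C x)))"
    unfolding cC mul_char_eq by (rule conj_char_eq[OF mc_mulf[OF B mc_invf[OF C]]])
  have D1: "jacobi (mul_char A (conj_char C)) (mul_char (mul_char A (conj_char B)) (conj_char (mul_char A (conj_char C))))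
      = jacobi (\<lambda>x. A x * inverse (C x)) (\<lambda>x. inverse (B x) * C x)"
    unfolding cAC unfolding cB cC mul_char_eq using cancel_fun[OF A B C] by simp
  have D2: "jacobi (mul_char B (conj_char C)) (mul_char (mul_char B (conj_char A)) (conj_char (mul_char B (conj_char C))))
      = jacobi (\<lambda>x. B x * inverse (C x)) (\<lambda>x. inverse (A x) * C x)"
    unfolding cBC unfolding cA cC mul_char_eq using cancel_fun[OF B A C] by simp
  have N1': "N1 = jacobi (\<lambda>x. A x * inverse (C x)) (\<lambda>x. inverse (B x) * C x)"
    unfolding N1_def cB cC mul_char_eq by (simp add: mult.commute)
  have N2': "N2 = jacobi (\<lambda>x. B x * inverse (C x)) (\<lambda>x. inverse (A x) * C x)"
    unfolding N2_def cA cC mul_char_eq by (subst J_sym) (simp add: mult.commute)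
  have ACn: "(\<lambda>x. A x * inverse (C x)) \<noteq> triv_char"
    using neq_triv[OF C A] AC by (simp add: mult.commute)
  have BCn: "(\<lambda>x. B x * inverse (C x)) \<noteq> triv_char"
    using neq_triv[OF C B] BC by (simp add: mult.commute)
  have N1nz: "N1 \<noteq> 0" unfolding N1'
    by (rule J_nz[OF mc_mulf[OF A mc_invf[OF C]] mc_mulf[OF mc_invf[OF B] C] ACn])
  have N2nz: "N2 \<noteq> 0" unfolding N2'
    by (rule J_nz[OF mc_mulf[OF B mc_invf[OF C]] mc_mulf[OF mc_invf[OF A] C] BCn])
  have F: "F21 A B C lam = P / JB" unfolding F21_def P_def JB2 ..
  have F1: "F21 A (mul_char A (conj_char C)) (mul_char A (conj_char B)) (inverse lam) = P1 / N1"
    unfolding F21_def P1_def D1 N1' ..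
  have F2: "F21 B (mul_char B (conj_char C)) (mul_char B (conj_char A)) (inverse lam) = P2 / N2"
    unfolding F21_def P2_def D2 N2' ..
  have key: "JB / JA * P' = P" using SY JAnz by (simp add: field_simps)
  have t2: "s * conj_char B lam * (JB / JA) * P2 = P"
    using key IB by (simp add: mult_ac)
  have part1: "2 * P = s * conj_char A lam * P1 + s * conj_char B lam * (JB / JA) * P2"
    using IA t2 by simp
  have u1: "s * conj_char A lam * (N1 / JB) * (P1 / N1) = P / JB"
    using IA N1nz by (simp add: field_simps)
  have u2: "s * conj_char B lam * (N2 / JA) * (P2 / N2) = P / JB"
  proof -
    have "s * conj_char B lam * (N2 / JA) * (P2 / N2) = P' / JA"
      using IB N2nz by (simp add: field_simps)
    also have "\<dots> = P / JB" using SY JAnz JBnz by (simp add: field_simps)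
    finally show ?thesis .
  qed
  have part2: "2 * (P / JB) = s * conj_char A lam * (N1 / JB) * (P1 / N1) + s * conj_char B lam * (N2 / JA) * (P2 / N2)"
    using u1 u2 by simp
  show ?thesis
    using part1 part2 unfolding F F1 F2
    unfolding s_def P_def P1_def P2_def JA_def JB_def N1_def N2_def JB2 by simp
qed

end
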